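(* Let $k\ge 0$, $n\ge 1$, let $G\sim\mathcal G_n^k$ and let $E$ be the number of edges of $G$. Then $\mathbb E[E]=\binom n2$ for $n\le k+2$, and for $n\ge k+3$ $$\mathbb E[E]=\frac12(k+1)\left(4n-3k-6-2(k+2)\sum_{l=k+3}^{n}\frac1l\right)=(k+1)(2n-o(n)).$$ Moreover, for every $t\ge 0$, $$\mathbb P\big(|E-\mathbb E[E]|>(k+1)t\big)\le 2\exp\left(-\frac{2t^2}{n}\right).$$
   Context: A semi-bar $k$-visibility representation is a finite collection of pairwise disjoint closed horizontal segments (bars) in the plane whose left endpoints all lie on one common vertical line; two bars are adjacent if there is a vertical segment with endpoints on the two bars intersecting at most $k$ other bars; the semi-bar $k$-visibility graph has one vertex per bar. $\mathcal G_n^k$ is the distribution of the random semi-bar $k$-visibility graph on $n$ vertices obtained from $n$ bars at $n$ distinct heights whose left endpoints lie at $x=0$ and whose right endpoints are drawn i.i.d. uniformly from $(0,1)$ (equivalently, the relative order of the bar lengths from top to bottom is a uniformly random permutation in $S_n$). *)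

theory Defs
  imports "HOL-Probability.Probability" "HOL-Combinatorics.Permutations" "HOL-Library.Landau_Symbols"
begin

text \<open>Bars are indexed by their heights 0,...,n-1; every bar has its left endpoint at x = 0
  and bar l is the closed segment [0, len l] at height l.  A vertical segment at abscissa x
  joining bars i and j lies on both bars iff 0 <= x <= min (len i) (len j), and it meets
  exactly those bars l strictly between i and j (in height) with x <= len l.\<close>

definition sbv_adj :: "nat \<Rightarrow> (nat \<Rightarrow> real) \<Rightarrow> nat \<Rightarrow> nat \<Rightarrow> bool" where
  "sbv_adj k len i j \<longleftrightarrow> i \<noteq> j \<and>
     (\<exists>x::real. 0 \<le> x \<and> x \<le> len i \<and> x \<le> len j \<and>
        card {l. min i j < l \<and> l < max i j \<and> x \<le> len l} \<le> k)"

definition sbv_num_edges :: "nat \<Rightarrow> nat \<Rightarrow> (nat \<Rightarrow> real) \<Rightarrow> nat" where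
  "sbv_num_edges k n len = card {(i, j). i < j \<and> j < n \<and> sbv_adj k len i j}"

definition random_bar_lengths :: "nat \<Rightarrow> (nat \<Rightarrow> real) pmf" where
  "random_bar_lengths n =
     map_pmf (\<lambda>\<sigma> l. (real (\<sigma> l) + 1) / (real n + 1))
             (pmf_of_set {\<sigma>. \<sigma> permutes {..<n}})"

definition sbv_edges_pmf :: "nat \<Rightarrow> nat \<Rightarrow> nat pmf" where
  "sbv_edges_pmf k n = map_pmf (sbv_num_edges k n) (random_bar_lengths n)"

definition sbv_expected_edges :: "nat \<Rightarrow> nat \<Rightarrow> real" where
  "sbv_expected_edges k n = measure_pmf.expectation (sbv_edges_pmf k n) real"

end

theory Submission
  imports Defs "HOL-Real_Asymp.Real_Asymp"
begin


definition adjp :: "nat \<Rightarrow> (nat \<Rightarrow> nat) \<Rightarrow> nat \<Rightarrow> nat \<Rightarrow> bool" where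
  "adjp k \<sigma> i j \<longleftrightarrow> card {l. i < l \<and> l < j \<and> min (\<sigma> i) (\<sigma> j) \<le> \<sigma> l} \<le> k"

definition edgesp :: "nat \<Rightarrow> nat \<Rightarrow> (nat \<Rightarrow> nat) \<Rightarrow> nat" where
  "edgesp k n \<sigma> = card {(i, j). i < j \<and> j < n \<and> adjp k \<sigma> i j}"

definition ins :: "nat \<Rightarrow> (nat \<Rightarrow> nat) \<Rightarrow> nat \<Rightarrow> nat" where
  "ins p \<sigma> l = (if l < p then Suc (\<sigma> l) else if l = p then 0 else Suc (\<sigma> (l - 1)))"

definition sh :: "nat \<Rightarrow> nat \<Rightarrow> nat" where
  "sh p l = (if l < p then l else Suc l)"

definition unsh :: "nat \<Rightarrow> nat \<Rightarrow> nat" where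
  "unsh p l = (if l < p then l else l - 1)"

definition hh :: "nat \<Rightarrow> nat \<Rightarrow> nat \<Rightarrow> nat" where
  "hh k r g = min (k+1) g + min (k+1) (r - g)"

lemma sh_less_iff[simp]: "sh p a < sh p b \<longleftrightarrow> a < b"
  by (auto simp: sh_def)

lemma sh_neq[simp]: "sh p a \<noteq> p"
  by (auto simp: sh_def)

lemma ins_sh[simp]: "ins p \<sigma> (sh p x) = Suc (\<sigma> x)"
  by (auto simp: sh_def ins_def)

lemma ins_p[simp]: "ins p \<sigma> p = 0"
  by (auto simp: ins_def)

lemma sh_unsh: "l \<noteq> p \<Longrightarrow> sh p (unsh p l) = l"
  by (auto simp: sh_def unsh_def)

lemma inj_sh: "inj (sh p)"
  by (auto simp: inj_def sh_def split: if_splits)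

lemma mid_eq:
  "{l. sh p i < l \<and> l < sh p j \<and> min (ins p \<sigma> (sh p i)) (ins p \<sigma> (sh p j)) \<le> ins p \<sigma> l}
   = sh p ` {l. i < l \<and> l < j \<and> min (\<sigma> i) (\<sigma> j) \<le> \<sigma> l}"
proof
  show "sh p ` {l. i < l \<and> l < j \<and> min (\<sigma> i) (\<sigma> j) \<le> \<sigma> l} \<subseteq> {l. sh p i < l \<and> l < sh p j \<and> min (ins p \<sigma> (sh p i)) (ins p \<sigma> (sh p j)) \<le> ins p \<sigma> l}"
    by auto
next
  show "{l. sh p i < l \<and> l < sh p j \<and> min (ins p \<sigma> (sh p i)) (ins p \<sigma> (sh p j)) \<le> ins p \<sigma> l}
     \<subseteq> sh p ` {l. i < l \<and> l < j \<and> min (\<sigma> i) (\<sigma> j) \<le> \<sigma> l}"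
  proof
    fix l assume l: "l \<in> {l. sh p i < l \<and> l < sh p j \<and> min (ins p \<sigma> (sh p i)) (ins p \<sigma> (sh p j)) \<le> ins p \<sigma> l}"
    have "l \<noteq> p" using l by auto
    then have e: "l = sh p (unsh p l)" by (simp add: sh_unsh)
    define u where "u = unsh p l"
    have l2: "sh p i < sh p u \<and> sh p u < sh p j \<and> min (ins p \<sigma> (sh p i)) (ins p \<sigma> (sh p j)) \<le> ins p \<sigma> (sh p u)"
      using l e unfolding u_def by auto
    then have "u \<in> {l. i < l \<and> l < j \<and> min (\<sigma> i) (\<sigma> j) \<le> \<sigma> l}"
      by simp
    then show "l \<in> sh p ` {l. i < l \<and> l < j \<and> min (\<sigma> i) (\<sigma> j) \<le> \<sigma> l}"
      using e unfolding u_def by blast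
  qed
qed

lemma adjp_sh: "adjp k (ins p \<sigma>) (sh p i) (sh p j) \<longleftrightarrow> adjp k \<sigma> i j"
  unfolding adjp_def mid_eq
  by (subst card_image) (auto intro: inj_on_subset[OF inj_sh])

lemma card_left: "card {i. i < p \<and> p - i \<le> k + 1} = min (k+1) p"
proof -
  have "{i. i < p \<and> p - i \<le> k + 1} = {p - (k+1)..<p}" by auto
  then show ?thesis by simp
qed

lemma card_right: "p \<le> n \<Longrightarrow> card {j. p < j \<and> j \<le> n \<and> j - p \<le> k + 1} = min (k+1) (n - p)"
proof -
  have "{j. p < j \<and> j \<le> n \<and> j - p \<le> k + 1} = {p<..min n (p+k+1)}" by auto
  then show ?thesis by simp
qed

lemma card_mid: "i < j \<Longrightarrow> card {l. i < l \<and> l < j} = j - i - 1"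
proof -
  assume "i < j"
  have "{l. i < l \<and> l < j} = {i<..<j}" by auto
  then show ?thesis by simp
qed

lemma edgesp_ins:
  assumes p: "p \<le> n"
  shows "edgesp k (Suc n) (ins p \<sigma>) = edgesp k n \<sigma> + hh k n p"
proof -
  define \<tau> where "\<tau> = ins p \<sigma>"
  define S' where "S' = {(i, j). i < j \<and> j < Suc n \<and> adjp k \<tau> i j}"
  define S where "S = {(i, j). i < j \<and> j < n \<and> adjp k \<sigma> i j}"
  define A where "A = {x \<in> S'. fst x \<noteq> p \<and> snd x \<noteq> p}"
  define B where "B = {x \<in> S'. snd x = p}"
  define C where "C = {x \<in> S'. fst x = p}"
  have fin: "finite S'" unfolding S'_def
    by (rule finite_subset[of _ "{..<Suc n} \<times> {..<Suc n}"]) auto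
  have S'eq: "S' = A \<union> B \<union> C" by (auto simp: A_def B_def C_def)
  have AB: "A \<inter> B = {}" "(A \<union> B) \<inter> C = {}"
    by (auto simp: A_def B_def C_def S'_def)
  have Aeq: "A = (\<lambda>(i,j). (sh p i, sh p j)) ` S"
  proof
    show "(\<lambda>(i,j). (sh p i, sh p j)) ` S \<subseteq> A"
      unfolding A_def S_def S'_def \<tau>_def using p
      by (auto simp: adjp_sh) (auto simp: sh_def)
  next
    show "A \<subseteq> (\<lambda>(i,j). (sh p i, sh p j)) ` S"
    proof
      fix x assume x: "x \<in> A"
      obtain i j where ij: "x = (i, j)" by fastforce
      have i: "i = sh p (unsh p i)" and j: "j = sh p (unsh p j)"
        using x ij by (auto simp: A_def sh_unsh)
      have h: "i < j" "j < Suc n" "adjp k \<tau> i j" "i \<noteq> p" "j \<noteq> p"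
        using x ij unfolding A_def S'_def by auto
      have "unsh p i < unsh p j" using h(1) i j by (metis sh_less_iff)
      moreover have "unsh p j < n" using h(2,5) p by (auto simp: unsh_def)
      moreover have "adjp k \<sigma> (unsh p i) (unsh p j)"
        using h(3) i j unfolding \<tau>_def by (metis adjp_sh)
      ultimately have "(unsh p i, unsh p j) \<in> S" by (simp add: S_def)
      then show "x \<in> (\<lambda>(i,j). (sh p i, sh p j)) ` S"
        using ij i j by force
    qed
  qed
  have cardA: "card A = card S"
    unfolding Aeq by (rule card_image) (auto simp: inj_on_def dest: injD[OF inj_sh])
  have Beq: "B = (\<lambda>i. (i, p)) ` {i. i < p \<and> p - i \<le> k + 1}"
    unfolding B_def S'_def \<tau>_def using p
    by (auto simp: adjp_def card_mid)
  have cardB: "card B = min (k+1) p"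
    unfolding Beq using card_left[of p k] by (subst card_image) (simp_all add: inj_on_def)
  have Ceq: "C = (\<lambda>j. (p, j)) ` {j. p < j \<and> j \<le> n \<and> j - p \<le> k + 1}"
    unfolding C_def S'_def \<tau>_def using p
    by (auto simp: adjp_def card_mid)
  have cardC: "card C = min (k+1) (n - p)"
    unfolding Ceq using p card_right[of p n k] by (subst card_image) (simp_all add: inj_on_def)
  have "card S' = card A + card B + card C"
  proof -
    have fA: "finite A" "finite B" "finite C" using fin by (auto simp: A_def B_def C_def)
    show ?thesis unfolding S'eq using fA AB by (simp add: card_Un_disjoint)
  qed
  then show ?thesis
    by (simp add: edgesp_def S'_def S_def \<tau>_def cardA cardB cardC hh_def)
qed

lemma ins_alt: "ins p \<sigma> l = (if l = p then 0 else Suc (\<sigma> (unsh p l)))"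
  by (auto simp: ins_def unsh_def)

lemma ins_eq_0: "ins p \<sigma> l = 0 \<longleftrightarrow> l = p"
  by (auto simp: ins_alt)

lemma ins_permutes:
  assumes s: "\<sigma> permutes {..<n}" and p: "p \<le> n"
  shows "ins p \<sigma> permutes {..<Suc n}"
proof (rule bij_imp_permutes)
  have injs: "inj \<sigma>" using s by (rule permutes_inj)
  have inj: "inj_on (ins p \<sigma>) {..<Suc n}"
  proof (rule inj_onI)
    fix x y assume "x \<in> {..<Suc n}" "y \<in> {..<Suc n}" and e: "ins p \<sigma> x = ins p \<sigma> y"
    show "x = y"
    proof (cases "x = p \<or> y = p")
      case True then show ?thesis using e by (auto simp: ins_alt split: if_splits)
    next
      case False
      then have "\<sigma> (unsh p x) = \<sigma> (unsh p y)" using e by (simp add: ins_alt)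
      then have "unsh p x = unsh p y" using injs by (simp add: inj_eq)
      then show ?thesis using False by (metis sh_unsh)
    qed
  qed
  have sub: "ins p \<sigma> ` {..<Suc n} \<subseteq> {..<Suc n}"
  proof
    fix y assume "y \<in> ins p \<sigma> ` {..<Suc n}"
    then obtain x where x: "x < Suc n" "y = ins p \<sigma> x" by auto
    show "y \<in> {..<Suc n}"
    proof (cases "x = p")
      case True then show ?thesis using x by (simp add: ins_alt)
    next
      case False
      then have "unsh p x < n" using x p by (auto simp: unsh_def)
      then have "\<sigma> (unsh p x) < n" using permutes_in_image[OF s] by auto
      then show ?thesis using x False by (simp add: ins_alt)
    qed
  qed
  have "ins p \<sigma> ` {..<Suc n} = {..<Suc n}"
    by (rule endo_inj_surj) (use inj sub in auto)
  then show "bij_betw (ins p \<sigma>) {..<Suc n} {..<Suc n}"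
    using inj by (simp add: bij_betw_def)
next
  fix x assume "x \<notin> {..<Suc n}"
  then have "x > p" "x - 1 \<notin> {..<n}" using p by auto
  then show "ins p \<sigma> x = x" using permutes_not_in[OF s] by (auto simp: ins_def)
qed

lemma ins_inj:
  assumes "ins p \<sigma> = ins p' \<sigma>'"
  shows "p = p' \<and> \<sigma> = \<sigma>'"
proof -
  have "ins p' \<sigma>' p = 0" using assms ins_p[of p \<sigma>] by metis
  then have pp: "p = p'" by (simp add: ins_eq_0)
  have "\<sigma> l = \<sigma>' l" for l
    using arg_cong[OF assms, of "\<lambda>f. f (sh p l)"] pp by simp
  with pp show ?thesis by auto
qed

fun phi :: "nat \<Rightarrow> (nat \<Rightarrow> nat) \<Rightarrow> nat \<Rightarrow> nat" where
  "phi 0 g = id"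
| "phi (Suc n) g = ins (g n) (phi n g)"

lemma phi_permutes: "(\<forall>r<n. g r \<le> r) \<Longrightarrow> phi n g permutes {..<n}"
  by (induction n) (auto intro: ins_permutes permutes_id)

lemma phi_inj: "phi n g = phi n g' \<Longrightarrow> \<forall>r<n. g r = g' r"
proof (induction n)
  case 0 then show ?case by simp
next
  case (Suc n)
  then have "g n = g' n \<and> phi n g = phi n g'" using ins_inj by simp
  with Suc show ?case by (auto simp: less_Suc_eq)
qed

lemma edgesp_phi: "(\<forall>r<n. g r \<le> r) \<Longrightarrow> edgesp k n (phi n g) = (\<Sum>r<n. hh k r (g r))"
proof (induction n)
  case 0 then show ?case by (simp add: edgesp_def)
next
  case (Suc n)
  then show ?case by (simp add: edgesp_ins)
qed

definition Gset :: "nat \<Rightarrow> (nat \<Rightarrow> nat) set" where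
  "Gset n = PiE_dflt {..<n} 0 (\<lambda>r. {..r})"

lemma Gset_iff: "g \<in> Gset n \<longleftrightarrow> (\<forall>r<n. g r \<le> r) \<and> (\<forall>r\<ge>n. g r = 0)"
  by (auto simp: Gset_def PiE_dflt_def not_less)

lemma finite_Gset: "finite (Gset n)"
  unfolding Gset_def by (rule finite_PiE_dflt) auto

lemma card_Gset: "card (Gset n) = fact n"
proof -
  have "card (Gset n) = (\<Prod>r<n. card {..r})"
    unfolding Gset_def by (rule card_PiE_dflt) auto
  also have "\<dots> = (\<Prod>r<n. Suc r)" by simp
  also have "\<dots> = fact n" by (induction n) (auto simp: fact_Suc)
  finally show ?thesis .
qed

lemma inj_phi: "inj_on (phi n) (Gset n)"
proof (rule inj_onI)
  fix g g' assume "g \<in> Gset n" "g' \<in> Gset n" "phi n g = phi n g'"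
  then show "g = g'" using phi_inj[of n g g'] unfolding Gset_iff fun_eq_iff
    by (metis not_less)
qed

lemma phi_image: "phi n ` Gset n = {\<sigma>. \<sigma> permutes {..<n}}"
proof (rule card_subset_eq)
  show "finite {\<sigma>. \<sigma> permutes {..<n}}" by (rule finite_permutations) simp
  show "phi n ` Gset n \<subseteq> {\<sigma>. \<sigma> permutes {..<n}}"
    by (auto simp: Gset_iff intro: phi_permutes)
  show "card (phi n ` Gset n) = card {\<sigma>. \<sigma> permutes {..<n}}"
    by (simp add: card_image[OF inj_phi] card_Gset card_permutations)
qed

lemma adj_equiv:
  fixes len :: "nat \<Rightarrow> real"
  assumes "i < j" "0 \<le> len i" "0 \<le> len j"
  shows "sbv_adj k len i j \<longleftrightarrow> card {l. i < l \<and> l < j \<and> min (len i) (len j) \<le> len l} \<le> k"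
proof
  assume "sbv_adj k len i j"
  then obtain x where x: "0 \<le> x" "x \<le> len i" "x \<le> len j"
     "card {l. min i j < l \<and> l < max i j \<and> x \<le> len l} \<le> k" by (auto simp: sbv_adj_def)
  have "card {l. i < l \<and> l < j \<and> min (len i) (len j) \<le> len l} \<le> card {l. min i j < l \<and> l < max i j \<and> x \<le> len l}"
    using assms x by (intro card_mono) (auto simp: min_def max_def)
  then show "card {l. i < l \<and> l < j \<and> min (len i) (len j) \<le> len l} \<le> k" using x by linarith
next
  assume "card {l. i < l \<and> l < j \<and> min (len i) (len j) \<le> len l} \<le> k"
  then show "sbv_adj k len i j" unfolding sbv_adj_def using assms
    by (intro conjI exI[of _ "min (len i) (len j)"]) (auto simp: min_def max_def)
qed

lemma num_edges_eq:
  "sbv_num_edges k n (\<lambda>l. (real (\<sigma> l) + 1) / (real n + 1)) = edgesp k n \<sigma>"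
proof -
  have mono: "((real a + 1) / (real n + 1) \<le> (real b + 1) / (real n + 1)) \<longleftrightarrow> a \<le> b" for a b
    by (simp add: divide_le_cancel add_pos_pos)
  have mn: "min ((real a + 1) / (real n + 1)) ((real b + 1) / (real n + 1)) = (real (min a b) + 1) / (real n + 1)" for a b
    by (simp add: min_def mono)
  have "sbv_adj k (\<lambda>l. (real (\<sigma> l) + 1) / (real n + 1)) i j \<longleftrightarrow> adjp k \<sigma> i j" if "i < j" for i j
    using that by (subst adj_equiv) (simp_all add: mn mono adjp_def)
  then show ?thesis unfolding sbv_num_edges_def edgesp_def
    by (intro arg_cong[where f=card]) auto
qed



definition Q :: "nat \<Rightarrow> (nat \<Rightarrow> nat) pmf" where
  "Q n = Pi_pmf {..<n} 0 (\<lambda>r. pmf_of_set {..r})"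

lemma Q_eq: "Q n = pmf_of_set (Gset n)"
  unfolding Q_def Gset_def by (rule Pi_pmf_of_set) auto

lemma Gset_ne: "Gset n \<noteq> {}"
proof -
  have "(\<lambda>_. 0) \<in> Gset n" by (simp add: Gset_iff)
  then show ?thesis by auto
qed

lemma edges_pmf_eq:
  "sbv_edges_pmf k n = map_pmf (\<lambda>g. \<Sum>r<n. hh k r (g r)) (Q n)"
proof -
  have "sbv_edges_pmf k n = map_pmf (edgesp k n) (pmf_of_set {\<sigma>. \<sigma> permutes {..<n}})"
    unfolding sbv_edges_pmf_def random_bar_lengths_def pmf.map_comp o_def num_edges_eq ..
  also have "pmf_of_set {\<sigma>. \<sigma> permutes {..<n}} = map_pmf (phi n) (pmf_of_set (Gset n))"
    by (subst map_pmf_of_set_inj) (simp_all add: inj_phi Gset_ne finite_Gset phi_image)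
  also have "map_pmf (edgesp k n) (map_pmf (phi n) (pmf_of_set (Gset n)))
       = map_pmf (\<lambda>g. \<Sum>r<n. hh k r (g r)) (pmf_of_set (Gset n))"
    unfolding pmf.map_comp o_def
    by (intro map_pmf_cong refl) (simp add: Gset_ne finite_Gset Gset_iff edgesp_phi)
  finally show ?thesis by (simp add: Q_eq)
qed

lemma finite_set_Q: "finite (set_pmf (Q n))"
  by (simp add: Q_eq Gset_ne finite_Gset)

definition avg :: "nat \<Rightarrow> nat \<Rightarrow> real" where
  "avg k r = (\<Sum>g\<le>r. real (hh k r g)) / real (Suc r)"

lemma expectation_component:
  assumes "r < n"
  shows "measure_pmf.expectation (Q n) (\<lambda>g. real (hh k r (g r))) = avg k r"
proof -
  have "map_pmf (\<lambda>g. g r) (Q n) = pmf_of_set {..r}"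
    unfolding Q_def using assms by (subst Pi_pmf_component) auto
  have "measure_pmf.expectation (Q n) (\<lambda>g. real (hh k r (g r)))
      = measure_pmf.expectation (map_pmf (\<lambda>g. g r) (Q n)) (\<lambda>x. real (hh k r x))"
    by (rule integral_map_pmf[symmetric])
  also have "\<dots> = measure_pmf.expectation (pmf_of_set {..r}) (\<lambda>x. real (hh k r x))"
    unfolding \<open>map_pmf (\<lambda>g. g r) (Q n) = pmf_of_set {..r}\<close> ..
  also have "\<dots> = (\<Sum>x\<le>r. real (hh k r x)) / real (card {..r})"
    by (rule integral_pmf_of_set) auto
  also have "\<dots> = avg k r"
    by (simp only: avg_def card_atMost)
  finally show ?thesis .
qed

lemma expected_eq: "sbv_expected_edges k n = (\<Sum>r<n. avg k r)"
proof -
  have "sbv_expected_edges k n = measure_pmf.expectation (Q n) (\<lambda>g. \<Sum>r<n. real (hh k r (g r)))"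
    unfolding sbv_expected_edges_def edges_pmf_eq by simp
  also have "\<dots> = (\<Sum>r<n. measure_pmf.expectation (Q n) (\<lambda>g. real (hh k r (g r))))"
    by (rule Bochner_Integration.integral_sum) (simp add: integrable_measure_pmf_finite finite_set_Q)
  also have "\<dots> = (\<Sum>r<n. avg k r)"
    by (intro sum.cong refl) (simp add: expectation_component)
  finally show ?thesis .
qed

lemma hh_bounds: "min (k+1) r \<le> hh k r g \<and> hh k r g \<le> min (k+1) r + (k+1)"
proof (cases "g \<le> r")
  case True
  show ?thesis
  proof (cases "r \<le> k+1")
    case True
    then have "hh k r g = r" using \<open>g \<le> r\<close> unfolding hh_def by simp
    then show ?thesis using True by simp
  next
    case False
    have "min (k+1) g + min (k+1) (r-g) \<ge> k+1" using \<open>g \<le> r\<close> False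
      by (cases "g \<le> k+1") auto
    moreover have "min (k+1) g + min (k+1) (r-g) \<le> (k+1) + (k+1)"
      by (intro add_mono) auto
    ultimately show ?thesis using False unfolding hh_def by simp
  qed
next
  case False
  then have e: "hh k r g = min (k+1) g" unfolding hh_def by simp
  have A: "min (k+1) r \<le> min (k+1) g" using False by (intro min.mono) auto
  have "min (k+1) g \<le> k+1" by simp
  then have B: "min (k+1) g \<le> min (k+1) r + (k+1)" using le_add2 order_trans by blast
  show ?thesis unfolding e using A B by blast
qed



lemma sum_id_real: "(\<Sum>g\<le>k. real g) = real k * (real k + 1) / 2"
  by (induction k) (auto simp: field_simps)

lemma sum_min_aux: "(\<Sum>g\<le>k + m. real (min (k+1) g)) = real (k+1) * (real (k + m) - real k / 2)"
proof (induction m)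
  case 0
  have "(\<Sum>g\<le>k. real (min (k+1) g)) = (\<Sum>g\<le>k. real g)"
    by (intro sum.cong refl) auto
  then show ?case by (simp add: sum_id_real field_simps)
next
  case (Suc m)
  have "(\<Sum>g\<le>k + Suc m. real (min (k+1) g)) = (\<Sum>g\<le>k + m. real (min (k+1) g)) + real (k+1)"
    by simp
  then show ?case using Suc by (simp add: field_simps)
qed

lemma sum_min: "k \<le> r \<Longrightarrow> (\<Sum>g\<le>r. real (min (k+1) g)) = real (k+1) * (real r - real k / 2)"
  using sum_min_aux[of k "r - k"] by simp

lemma sum_rev: fixes r :: nat shows "(\<Sum>g\<le>r. f (r - g)) = (\<Sum>g\<le>r. (f g :: real))"
proof -
  have "(\<Sum>g<Suc r. f (Suc r - Suc g)) = (\<Sum>g<Suc r. f g)"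
    by (rule sum.nat_diff_reindex)
  then show ?thesis by (simp add: lessThan_Suc_atMost)
qed

lemma avg_small: "r \<le> k + 1 \<Longrightarrow> avg k r = real r"
proof -
  assume r: "r \<le> k + 1"
  have "(\<Sum>g\<le>r. real (hh k r g)) = (\<Sum>g\<le>r. real r)"
    using r by (intro sum.cong refl) (auto simp: hh_def)
  then show ?thesis by (simp add: avg_def)
qed

lemma avg_big: "k + 1 \<le> r \<Longrightarrow> avg k r = real (k+1) * (2 * real r - real k) / (real r + 1)"
proof -
  assume r: "k + 1 \<le> r"
  have "(\<Sum>g\<le>r. real (hh k r g)) = (\<Sum>g\<le>r. real (min (k+1) g)) + (\<Sum>g\<le>r. real (min (k+1) (r - g)))"
    by (simp add: hh_def sum.distrib)
  also have "(\<Sum>g\<le>r. real (min (k+1) (r - g))) = (\<Sum>g\<le>r. real (min (k+1) g))"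
    by (rule sum_rev[where f="\<lambda>g. real (min (k+1) g)"])
  also have "(\<Sum>g\<le>r. real (min (k+1) g)) = real (k+1) * (real r - real k / 2)"
    using r by (intro sum_min) simp
  finally show ?thesis by (simp add: avg_def field_simps)
qed

lemma EE_small: "n \<le> k + 2 \<Longrightarrow> (\<Sum>r<n. avg k r) = real (n choose 2)"
proof (induction n)
  case 0 then show ?case by simp
next
  case (Suc n)
  have "Suc n choose 2 = n + (n choose 2)"
    by (simp add: numeral_2_eq_2)
  then show ?case using Suc by (simp add: avg_small)
qed

definition FF :: "nat \<Rightarrow> nat \<Rightarrow> real" where
  "FF k n = 1/2 * real (k + 1) * (4 * real n - 3 * real k - 6
             - 2 * real (k + 2) * (\<Sum>l = k + 3..n. 1 / real l))"

lemma EE_big_aux: "(\<Sum>r<k + 2 + m. avg k r) = FF k (k + 2 + m)"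
proof (induction m)
  case 0
  have "(\<Sum>r<k + 2. avg k r) = real ((k+2) choose 2)" by (rule EE_small) simp
  also have "(k+2) choose 2 = (k+1)*(k+2) div 2" by (simp add: choose_two)
  also have "real ((k+1)*(k+2) div 2) = real (k+1) * real (k+2) / 2"
    by (subst real_of_nat_div) (auto simp: algebra_simps)
  finally show ?case by (simp add: FF_def field_simps)
next
  case (Suc m)
  have "(\<Sum>r<k + 2 + Suc m. avg k r) = FF k (k + 2 + m) + avg k (k + 2 + m)"
    using Suc by simp
  also have "avg k (k + 2 + m) = real (k+1) * (2 * real (k+2+m) - real k) / (real (k+2+m) + 1)"
    by (rule avg_big) simp
  also have "(\<Sum>l = k + 3..k + 2 + Suc m. 1 / real l) = (\<Sum>l = k + 3..k + 2 + m. 1 / real l) + 1 / real (k + 3 + m)"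
    by (simp add: add.commute add.left_commute)
  then have "FF k (k + 2 + Suc m) = FF k (k + 2 + m) + real (k+1) * (2 - real (k+2) / real (k + 3 + m))"
    unfolding FF_def by (simp add: field_simps)
  moreover have "real (k+1) * (2 * real (k+2+m) - real k) / (real (k+2+m) + 1) = real (k+1) * (2 - real (k+2) / real (k + 3 + m))"
    by (simp add: field_simps)
  ultimately show ?case by simp
qed

lemma EE_big: "k + 2 \<le> n \<Longrightarrow> (\<Sum>r<n. avg k r) = FF k n"
proof -
  assume "k + 2 \<le> n"
  then obtain m where "n = k + 2 + m" using le_Suc_ex by blast
  then show ?thesis using EE_big_aux[of k m] by simp
qed



lemma harm_le_ln: "m \<ge> 1 \<Longrightarrow> (harm m :: real) \<le> 1 + ln (real m)"
proof -
  assume "m \<ge> 1"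
  then obtain j where j: "m = Suc j" by (cases m) auto
  have "harm (Suc j) - ln (real (Suc j)) \<le> (harm (Suc 0) - ln (real (Suc 0)) :: real)"
    using antimonoD[OF decseq_harm_diff_ln, of 0 j] by simp
  then show ?thesis using j by (simp add: harm_expand)
qed

lemma S_le_harm: "(\<Sum>l = k + 3..m. 1 / real l) \<le> (harm m :: real)"
proof -
  have "(\<Sum>l = k + 3..m. 1 / real l) = (\<Sum>l = k + 3..m. inverse (real l))"
    by (simp add: inverse_eq_divide)
  also have "\<dots> \<le> (\<Sum>l = 1..m. inverse (real l))"
    by (rule sum_mono2) auto
  finally show ?thesis unfolding harm_def .
qed

lemma S_nonneg: "(\<Sum>l = k + 3..m. 1 / real l) \<ge> (0::real)"
  by (rule sum_nonneg) simp

lemma little_o_part: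
  "(\<lambda>m. 2 * real m - sbv_expected_edges k m / real (k + 1)) \<in> o(\<lambda>m. real m)"
proof -
  define g where "g = (\<lambda>m::nat. (3 * real k + 6) / 2 + real (k+2) * (1 + ln (real m)))"
  have "eventually (\<lambda>m. norm (2 * real m - sbv_expected_edges k m / real (k + 1)) \<le> 1 * norm (g m)) sequentially"
  proof (rule eventually_sequentiallyI[of "k+3"])
    fix m assume m: "k + 3 \<le> m"
    define S where "S = (\<Sum>l = k + 3..m. 1 / real l)"
    have "sbv_expected_edges k m = FF k m" using m by (simp add: expected_eq EE_big)
    then have e: "2 * real m - sbv_expected_edges k m / real (k + 1) = (3 * real k + 6) / 2 + real (k+2) * S"
      unfolding FF_def S_def by (simp add: field_simps)
    have S0: "S \<ge> 0" unfolding S_def by (rule S_nonneg)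
    have S1: "S \<le> 1 + ln (real m)" unfolding S_def using S_le_harm[of k m] harm_le_ln[of m] m by linarith
    have lnm: "ln (real m) \<ge> 0" using m by simp
    have "real (k+2) * S \<le> real (k+2) * (1 + ln (real m))" using S1 by (intro mult_left_mono) auto
    then show "norm (2 * real m - sbv_expected_edges k m / real (k + 1)) \<le> 1 * norm (g m)"
      unfolding e g_def using S0 lnm by simp
  qed
  then have "(\<lambda>m. 2 * real m - sbv_expected_edges k m / real (k + 1)) \<in> O(g)"
    by (intro bigoI[of _ 1])
  moreover have "g \<in> o(\<lambda>m. real m)" unfolding g_def by real_asymp
  ultimately show ?thesis by (rule landau_o.big_small_trans)
qed



lemma tail_bound:
  assumes n: "n \<ge> 1" and t: "t \<ge> 0"
  shows "measure_pmf.prob (sbv_edges_pmf k n)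
            {e. \<bar>real e - sbv_expected_edges k n\<bar> > real (k + 1) * t}
         \<le> 2 * exp (- 2 * t\<^sup>2 / real n)"
proof -
  define X where "X = (\<lambda>r (g::nat \<Rightarrow> nat). real (hh k r (g r)))"
  define a where "a = (\<lambda>r. real (min (k+1) r))"
  define b where "b = (\<lambda>r. real (min (k+1) r) + real (k+1))"
  define \<mu> where "\<mu> = sbv_expected_edges k n"
  interpret H: Hoeffding_ineq "measure_pmf (Q n)" "{..<n}" X a b \<mu>
  proof unfold_locales
    show "finite {..<n}" by simp
    have "prob_space.indep_vars (measure_pmf (Q n)) (\<lambda>_. count_space UNIV) (\<lambda>x f. f x) {..<n}"
      unfolding Q_def by (rule indep_vars_Pi_pmf) simp
    then show "prob_space.indep_vars (measure_pmf (Q n)) (\<lambda>_. borel) X {..<n}"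
      unfolding X_def
      by (rule prob_space.indep_vars_compose2[OF measure_pmf.prob_space_axioms, where Y="\<lambda>r x. real (hh k r x)"]) simp
  next
    fix i assume "i \<in> {..<n}"
    show "AE x in measure_pmf (Q n). X i x \<in> {a i..b i}"
    proof (intro AE_I2)
      fix g :: "nat \<Rightarrow> nat"
      have h1: "min (k+1) i \<le> hh k i (g i)" and h2: "hh k i (g i) \<le> min (k+1) i + (k+1)"
        using hh_bounds[of k i "g i"] by auto
      have "real (hh k i (g i)) \<le> real (min (k+1) i + (k+1))" using h2 by (rule of_nat_mono)
      moreover have "real (min (k+1) i) \<le> real (hh k i (g i))" using h1 by (rule of_nat_mono)
      ultimately show "X i g \<in> {a i..b i}" unfolding X_def a_def b_def by simp
    qed
  next
    show "\<mu> \<equiv> \<Sum>i<n. measure_pmf.expectation (Q n) (X i)"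
      unfolding \<mu>_def X_def expected_eq
      by (rule eq_reflection, intro sum.cong refl) (simp add: expectation_component)
  qed
  define \<epsilon> where "\<epsilon> = real (k+1) * t"
  have eps: "\<epsilon> \<ge> 0" using t by (simp add: \<epsilon>_def)
  have sumsq: "(\<Sum>i<n. (b i - a i)\<^sup>2) = real n * (real (k+1))\<^sup>2"
    by (simp add: a_def b_def)
  have pos: "(\<Sum>i<n. (b i - a i)\<^sup>2) > 0" unfolding sumsq using n by simp
  have "measure_pmf.prob (sbv_edges_pmf k n)
            {e. \<bar>real e - sbv_expected_edges k n\<bar> > real (k + 1) * t}
        = measure_pmf.prob (Q n) ((\<lambda>g. \<Sum>r<n. hh k r (g r)) -` {e. \<bar>real e - \<mu>\<bar> > \<epsilon>})"
    by (simp add: edges_pmf_eq \<mu>_def \<epsilon>_def)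
  also have "\<dots> \<le> measure_pmf.prob (Q n) {x \<in> space (measure_pmf (Q n)). \<bar>(\<Sum>i<n. X i x) - \<mu>\<bar> \<ge> \<epsilon>}"
    by (intro measure_pmf.finite_measure_mono) (auto simp: X_def)
  also have "\<dots> \<le> 2 * exp (-2 * \<epsilon>\<^sup>2 / (\<Sum>i<n. (b i - a i)\<^sup>2))"
    by (rule H.Hoeffding_ineq_abs_ge[OF eps pos])
  also have "-2 * \<epsilon>\<^sup>2 / (\<Sum>i<n. (b i - a i)\<^sup>2) = - 2 * t\<^sup>2 / real n"
    unfolding sumsq \<epsilon>_def by (simp add: power_mult_distrib)
  finally show ?thesis .
qed


theorem mainTheorem15:
  fixes k n :: nat
  assumes "n \<ge> 1"
  shows "(n \<le> k + 2 \<longrightarrow> sbv_expected_edges k n = real (n choose 2))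
    \<and> (n \<ge> k + 3 \<longrightarrow> sbv_expected_edges k n =
          1/2 * real (k + 1) * (4 * real n - 3 * real k - 6
             - 2 * real (k + 2) * (\<Sum>l = k + 3..n. 1 / real l)))
    \<and> (\<lambda>m. 2 * real m - sbv_expected_edges k m / real (k + 1)) \<in> o(\<lambda>m. real m)
    \<and> (\<forall>t::real. t \<ge> 0 \<longrightarrow>
         measure_pmf.prob (sbv_edges_pmf k n)
            {e. \<bar>real e - sbv_expected_edges k n\<bar> > real (k + 1) * t}
         \<le> 2 * exp (- 2 * t\<^sup>2 / real n))"
proof (intro conjI impI allI)
  assume "n \<le> k + 2"
  then show "sbv_expected_edges k n = real (n choose 2)" by (simp add: expected_eq EE_small)
next
  assume "n \<ge> k + 3"
  then show "sbv_expected_edges k n =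
          1/2 * real (k + 1) * (4 * real n - 3 * real k - 6
             - 2 * real (k + 2) * (\<Sum>l = k + 3..n. 1 / real l))"
    by (simp add: expected_eq EE_big FF_def)
next
  show "(\<lambda>m. 2 * real m - sbv_expected_edges k m / real (k + 1)) \<in> o(\<lambda>m. real m)"
    by (rule little_o_part)
next
  fix t :: real assume "t \<ge> 0"
  then show "measure_pmf.prob (sbv_edges_pmf k n)
            {e. \<bar>real e - sbv_expected_edges k n\<bar> > real (k + 1) * t}
         \<le> 2 * exp (- 2 * t\<^sup>2 / real n)"
    using tail_bound[OF assms] by blast
qed

end
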